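(* Let $n,p\ge 1$, let $f:[-1,1]\to\mathbb{R}$ be a continuous, monotone non-decreasing function, and let $\mathcal{U}=\{\boldsymbol{u}^1,\ldots,\boldsymbol{u}^p\}\subset\mathbb{S}^n$ be a set of unit-quaternion-valued vectors. Define the real $p\times p$ matrix $C$ by $$c_{\eta\xi}=f\!\left(\tfrac{1}{n}\,\mathrm{Re}\{\langle \boldsymbol{u}^\xi,\boldsymbol{u}^\eta\rangle\}\right),\qquad \eta,\xi\in\{1,\ldots,p\}.$$ Suppose $C$ is invertible, let $c^{-1}_{\eta\xi}$ denote the $(\eta,\xi)$-entry of $C^{-1}$, and set $v_i^\xi=\sum_{\eta=1}^p u_i^\eta c^{-1}_{\eta\xi}$ for $i=1,\ldots,n$, $\xi=1,\ldots,p$. Consider the quaternion-valued recurrent projection neural network (QRPNN) which, from a state $\boldsymbol{x}(t)\in\mathbb{S}^n$, computes $$w_\xi(t)=f\!\left(\tfrac{1}{n}\mathrm{Re}\{\langle\boldsymbol{x}(t),\boldsymbol{u}^\xi\rangle\}\right),\qquad a_i(t)=\sum_{\xi=1}^p w_\xi(t)\,v_i^\xi,$$ and updates $x_i(t+1)=\sigma(a_i(t))$ if $0<|a_i(t)|<+\infty$ and $x_i(t+1)=x_i(t)$ otherwise. Then every fundamental memory $\boldsymbol{u}^\gamma$, $\gamma=1,\ldots,p$, is a stationary state (fixed point) of this QRPNN: if $\boldsymbol{x}(t)=\boldsymbol{u}^\gamma$ then $\boldsymbol{x}(t+1)=\boldsymbol{u}^\gamma$.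
   Context: $\mathbb{H}$ denotes the quaternions $q=q_0+q_1\mathbf{i}+q_2\mathbf{j}+q_3\mathbf{k}$ with $\mathbf{i}^2=\mathbf{j}^2=\mathbf{k}^2=\mathbf{ijk}=-1$; $\bar q=q_0-q_1\mathbf{i}-q_2\mathbf{j}-q_3\mathbf{k}$, $|q|=\sqrt{\bar q q}$, $\mathrm{Re}\{q\}=q_0$. $\mathbb{S}=\{q\in\mathbb{H}:|q|=1\}$ is the set of unit quaternions, and $\sigma:\mathbb{H}\setminus\{0\}\to\mathbb{S}$ is $\sigma(q)=q/|q|$. For $\boldsymbol{x},\boldsymbol{y}\in\mathbb{H}^n$ the inner product is $\langle\boldsymbol{x},\boldsymbol{y}\rangle=\sum_{i=1}^n\bar y_i x_i$. *)

theory Defs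
  imports "HOL-Analysis.Analysis"
begin

datatype quat = Quat (q0: real) (q1: real) (q2: real) (q3: real)

instantiation quat :: comm_monoid_add
begin
definition zero_quat_def: "0 = Quat 0 0 0 0"
definition plus_quat_def: "a + b = Quat (q0 a + q0 b) (q1 a + q1 b) (q2 a + q2 b) (q3 a + q3 b)"
instance by standard (auto simp: zero_quat_def plus_quat_def)
end

text \<open>Hamilton product, with i^2 = j^2 = k^2 = ijk = -1.\<close>
instantiation quat :: times
begin
definition times_quat_def: "a * b = Quat
   (q0 a * q0 b - q1 a * q1 b - q2 a * q2 b - q3 a * q3 b)
   (q0 a * q1 b + q1 a * q0 b + q2 a * q3 b - q3 a * q2 b)
   (q0 a * q2 b - q1 a * q3 b + q2 a * q0 b + q3 a * q1 b)
   (q0 a * q3 b + q1 a * q2 b - q2 a * q1 b + q3 a * q0 b)"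
instance ..
end

definition qreal :: "real \<Rightarrow> quat" where "qreal r = Quat r 0 0 0"
definition qcnj :: "quat \<Rightarrow> quat" where "qcnj q = Quat (q0 q) (- q1 q) (- q2 q) (- q3 q)"
definition qRe :: "quat \<Rightarrow> real" where "qRe q = q0 q"
definition qnorm :: "quat \<Rightarrow> real" where "qnorm q = sqrt (qRe (qcnj q * q))"
definition qsigma :: "quat \<Rightarrow> quat" where "qsigma q = qreal (1 / qnorm q) * q"

text \<open>Quaternionic vectors are functions from a finite index type 'n (n = CARD('n)).
  Inner product <x,y> = sum_i conj(y_i) x_i.\<close>
definition qinner :: "('n::finite \<Rightarrow> quat) \<Rightarrow> ('n \<Rightarrow> quat) \<Rightarrow> quat" where
  "qinner x y = (\<Sum>i\<in>UNIV. qcnj (y i) * x i)"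

text \<open>Fundamental memories u :: 'p => 'n => quat (u xi = u^xi), p = CARD('p).\<close>
definition corr_matrix :: "(real \<Rightarrow> real) \<Rightarrow> ('p::finite \<Rightarrow> 'n::finite \<Rightarrow> quat) \<Rightarrow> real^'p^'p" where
  "corr_matrix f u = (\<chi> \<eta> \<xi>. f (qRe (qinner (u \<xi>) (u \<eta>)) / real CARD('n)))"

definition qrpnn_v :: "(real \<Rightarrow> real) \<Rightarrow> ('p::finite \<Rightarrow> 'n::finite \<Rightarrow> quat) \<Rightarrow> 'p \<Rightarrow> 'n \<Rightarrow> quat" where
  "qrpnn_v f u \<xi> i = (\<Sum>\<eta>\<in>UNIV. u \<eta> i * qreal (matrix_inv (corr_matrix f u) $ \<eta> $ \<xi>))"

definition qrpnn_w :: "(real \<Rightarrow> real) \<Rightarrow> ('p::finite \<Rightarrow> 'n::finite \<Rightarrow> quat) \<Rightarrow> ('n \<Rightarrow> quat) \<Rightarrow> 'p \<Rightarrow> real" where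
  "qrpnn_w f u x \<xi> = f (qRe (qinner x (u \<xi>)) / real CARD('n))"

definition qrpnn_a :: "(real \<Rightarrow> real) \<Rightarrow> ('p::finite \<Rightarrow> 'n::finite \<Rightarrow> quat) \<Rightarrow> ('n \<Rightarrow> quat) \<Rightarrow> 'n \<Rightarrow> quat" where
  "qrpnn_a f u x i = (\<Sum>\<xi>\<in>UNIV. qreal (qrpnn_w f u x \<xi>) * qrpnn_v f u \<xi> i)"

text \<open>One synchronous update step; |a| < +infinity holds automatically here.\<close>
definition qrpnn_step :: "(real \<Rightarrow> real) \<Rightarrow> ('p::finite \<Rightarrow> 'n::finite \<Rightarrow> quat) \<Rightarrow> ('n \<Rightarrow> quat) \<Rightarrow> 'n \<Rightarrow> quat" where
  "qrpnn_step f u x i = (let a = qrpnn_a f u x i in if 0 < qnorm a then qsigma a else x i)"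

end

theory Submission
  imports Defs
begin

lemma quat_sum_comp:
  shows "q0 (sum g A) = (\<Sum>x\<in>A. q0 (g x)) \<and> q1 (sum g A) = (\<Sum>x\<in>A. q1 (g x)) \<and>
         q2 (sum g A) = (\<Sum>x\<in>A. q2 (g x)) \<and> q3 (sum g A) = (\<Sum>x\<in>A. q3 (g x))"
  by (induction A rule: infinite_finite_induct) (auto simp: zero_quat_def plus_quat_def)

lemma qreal_mult: "qreal r * q = Quat (r * q0 q) (r * q1 q) (r * q2 q) (r * q3 q)"
  by (simp add: qreal_def times_quat_def)

lemma mult_qreal: "q * qreal r = Quat (r * q0 q) (r * q1 q) (r * q2 q) (r * q3 q)"
  by (simp add: qreal_def times_quat_def mult.commute)

lemma minv_left: "invertible (A::real^'n^'n) \<Longrightarrow> matrix_inv A ** A = mat 1"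
  unfolding invertible_def matrix_inv_def by (metis (mono_tags, lifting) someI_ex)

lemma key:
  fixes u :: "'p::finite \<Rightarrow> 'n::finite \<Rightarrow> quat" and C :: "real^'p^'p"
    and pr :: "quat \<Rightarrow> real"
  assumes inv: "invertible C"
    and w: "\<And>\<xi>. w \<xi> = C $ \<xi> $ \<gamma>"
  shows "(\<Sum>\<xi>\<in>UNIV. w \<xi> * (\<Sum>\<eta>\<in>UNIV. matrix_inv C $ \<eta> $ \<xi> * pr (u \<eta> i))) = pr (u \<gamma> i)"
proof -
  have "(\<Sum>\<xi>\<in>UNIV. w \<xi> * (\<Sum>\<eta>\<in>UNIV. matrix_inv C $ \<eta> $ \<xi> * pr (u \<eta> i)))
      = (\<Sum>\<eta>\<in>UNIV. pr (u \<eta> i) * (\<Sum>\<xi>\<in>UNIV. matrix_inv C $ \<eta> $ \<xi> * C $ \<xi> $ \<gamma>))"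
    unfolding w sum_distrib_left
    by (subst sum.swap) (auto intro!: sum.cong simp: algebra_simps)
  also have "\<dots> = (\<Sum>\<eta>\<in>UNIV. pr (u \<eta> i) * (matrix_inv C ** C) $ \<eta> $ \<gamma>)"
    by (simp add: matrix_matrix_mult_def)
  also have "\<dots> = pr (u \<gamma> i)"
    using minv_left[OF inv] by (simp add: mat_def if_distrib cong: if_cong)
  finally show ?thesis .
qed

theorem theorem1:
  fixes f :: "real \<Rightarrow> real"
    and u :: "'p::finite \<Rightarrow> 'n::finite \<Rightarrow> quat"
    and \<gamma> :: 'p
  assumes "continuous_on {-1..1} f"
    and "mono_on {-1..1} f"
    and "\<And>\<xi> i. qnorm (u \<xi> i) = 1"
    and "invertible (corr_matrix f u)"
  shows "qrpnn_step f u (u \<gamma>) = u \<gamma>"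
proof
  fix i
  let ?C = "corr_matrix f u"
  have w: "\<And>\<xi>. qrpnn_w f u (u \<gamma>) \<xi> = ?C $ \<xi> $ \<gamma>"
    by (simp add: qrpnn_w_def corr_matrix_def)
  have a: "qrpnn_a f u (u \<gamma>) i = u \<gamma> i"
  proof (rule quat.expand, intro conjI)
    show "q0 (qrpnn_a f u (u \<gamma>) i) = q0 (u \<gamma> i)"
      using key[OF assms(4) w, of q0 u i]
      by (simp add: qrpnn_a_def qrpnn_v_def quat_sum_comp qreal_mult mult_qreal)
    show "q1 (qrpnn_a f u (u \<gamma>) i) = q1 (u \<gamma> i)"
      using key[OF assms(4) w, of q1 u i]
      by (simp add: qrpnn_a_def qrpnn_v_def quat_sum_comp qreal_mult mult_qreal)
    show "q2 (qrpnn_a f u (u \<gamma>) i) = q2 (u \<gamma> i)"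
      using key[OF assms(4) w, of q2 u i]
      by (simp add: qrpnn_a_def qrpnn_v_def quat_sum_comp qreal_mult mult_qreal)
    show "q3 (qrpnn_a f u (u \<gamma>) i) = q3 (u \<gamma> i)"
      using key[OF assms(4) w, of q3 u i]
      by (simp add: qrpnn_a_def qrpnn_v_def quat_sum_comp qreal_mult mult_qreal)
  qed
  show "qrpnn_step f u (u \<gamma>) i = u \<gamma> i"
    unfolding qrpnn_step_def Let_def a using assms(3)[of \<gamma> i]
    by (simp add: qsigma_def qreal_mult)
qed

end
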